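(* Any circuit on $n$ qubits composed entirely of controlled-not gates computes an operator that can be embedded, using $O(n^2)$ ancillae, in a quantum circuit of depth $O(\log n)$ (with absolute implied constants). Consequently, any family $(C_n)_{n\ge1}$ of such circuits, $C_n$ acting on $n$ qubits, defines a family of operators belonging to $\mathbf{QNC}^1$.
   Context: Qubits have computational basis $|0\rangle,|1\rangle$. The controlled-not gate on (control, target) is the two-qubit unitary $|a,b\rangle\mapsto|a,a\oplus b\rangle$. A circuit composed of controlled-not gates is any finite product of such gates applied to pairs of the $n$ qubits. A one-layer circuit is a tensor product of arbitrary one-qubit and two-qubit unitary gates acting on pairwise disjoint sets of qubits; a quantum circuit of depth $d$ is a product of $d$ one-layer circuits. An operator $F$ on $n$ qubits is embedded in an operator $M$ on $n+m$ qubits using $m$ ancillae if $M(|\psi\rangle\otimes|0\cdots0\rangle)=(F|\psi\rangle)\otimes|0\cdots0\rangle$ for all $|\psi\rangle$. A family $F=(F(n))_{n\ge1}$, $F(n)$ a unitary on $n$ qubits, is in $\mathbf{QNC}^1$ if there are constants $c_1,c_2,j$ such that for all $n$, $F(n)$ can be embedded in a quantum circuit of depth at most $c_1\log n$ using at most $c_2n^j$ ancillae. *)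

theory Defs
  imports Complex_Main "Jordan_Normal_Form.Schur_Decomposition"
begin

(* Basis states of N qubits are indexed by x < 2^N; qubit q of basis state x is bit q of x
   (little endian): qubit q has value  x div 2^q mod 2. *)
definition qbit :: "nat \<Rightarrow> nat \<Rightarrow> nat" where
  "qbit x q = x div 2 ^ q mod 2"

definition agree_except :: "nat set \<Rightarrow> nat \<Rightarrow> nat \<Rightarrow> bool" where
  "agree_except S x y \<longleftrightarrow> (\<forall>q. q \<notin> S \<longrightarrow> qbit x q = qbit y q)"

definition unitary_mat :: "nat \<Rightarrow> complex mat \<Rightarrow> bool" where
  "unitary_mat k A \<longleftrightarrow> A \<in> carrier_mat k k \<and> A * mat_adjoint A = 1\<^sub>m k
      \<and> mat_adjoint A * A = 1\<^sub>m k"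

definition embed1 :: "nat \<Rightarrow> complex mat \<Rightarrow> nat \<Rightarrow> complex mat" where
  "embed1 N U q = mat (2 ^ N) (2 ^ N)
     (\<lambda>(x, y). if agree_except {q} x y then U $$ (qbit x q, qbit y q) else 0)"

(* two-qubit gate U (4x4, basis |a,b> with index 2a+b) acting on qubits (q1,q2) *)
definition embed2 :: "nat \<Rightarrow> complex mat \<Rightarrow> nat \<Rightarrow> nat \<Rightarrow> complex mat" where
  "embed2 N U q1 q2 = mat (2 ^ N) (2 ^ N)
     (\<lambda>(x, y). if agree_except {q1, q2} x y
        then U $$ (2 * qbit x q1 + qbit x q2, 2 * qbit y q1 + qbit y q2) else 0)"

datatype gate = Gate1 "complex mat" nat | Gate2 "complex mat" nat nat

fun gate_support :: "gate \<Rightarrow> nat set" where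
  "gate_support (Gate1 U q) = {q}"
| "gate_support (Gate2 U q1 q2) = {q1, q2}"

fun valid_gate :: "nat \<Rightarrow> gate \<Rightarrow> bool" where
  "valid_gate N (Gate1 U q) \<longleftrightarrow> unitary_mat 2 U \<and> q < N"
| "valid_gate N (Gate2 U q1 q2) \<longleftrightarrow> unitary_mat 4 U \<and> q1 < N \<and> q2 < N \<and> q1 \<noteq> q2"

fun gate_op :: "nat \<Rightarrow> gate \<Rightarrow> complex mat" where
  "gate_op N (Gate1 U q) = embed1 N U q"
| "gate_op N (Gate2 U q1 q2) = embed2 N U q1 q2"

definition valid_layer :: "nat \<Rightarrow> gate list \<Rightarrow> bool" where
  "valid_layer N L \<longleftrightarrow> (\<forall>g \<in> set L. valid_gate N g) \<and>
     (\<forall>i < length L. \<forall>j < length L. i \<noteq> j \<longrightarrow>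
        gate_support (L ! i) \<inter> gate_support (L ! j) = {})"

definition layer_op :: "nat \<Rightarrow> gate list \<Rightarrow> complex mat" where
  "layer_op N L = foldr (\<lambda>g A. A * gate_op N g) L (1\<^sub>m (2 ^ N))"

(* a quantum circuit = list of layers; its depth is the length of the list;
   the first layer is applied first *)
definition valid_circuit :: "nat \<Rightarrow> gate list list \<Rightarrow> bool" where
  "valid_circuit N C \<longleftrightarrow> (\<forall>L \<in> set C. valid_layer N L)"

definition circuit_op :: "nat \<Rightarrow> gate list list \<Rightarrow> complex mat" where
  "circuit_op N C = foldr (\<lambda>L A. A * layer_op N L) C (1\<^sub>m (2 ^ N))"

(* |psi> \<otimes> |0...0> : ancillae are qubits n..n+m-1 *)
definition ext_anc :: "nat \<Rightarrow> nat \<Rightarrow> complex vec \<Rightarrow> complex vec" where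
  "ext_anc n m v = vec (2 ^ (n + m)) (\<lambda>x. if x < 2 ^ n then v $ x else 0)"

definition embeds :: "nat \<Rightarrow> nat \<Rightarrow> complex mat \<Rightarrow> complex mat \<Rightarrow> bool" where
  "embeds n m F M \<longleftrightarrow> F \<in> carrier_mat (2 ^ n) (2 ^ n) \<and> M \<in> carrier_mat (2 ^ (n + m)) (2 ^ (n + m))
     \<and> (\<forall>\<psi> \<in> carrier_vec (2 ^ n). M *\<^sub>v ext_anc n m \<psi> = ext_anc n m (F *\<^sub>v \<psi>))"

(* controlled-not on (control, target): |a,b> \<mapsto> |a, a xor b>, index 2a+b *)
definition cnot_mat :: "complex mat" where
  "cnot_mat = mat 4 4 (\<lambda>(i, j). if i = 2 * (j div 2) + (j div 2 + j mod 2) mod 2 then 1 else 0)"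

(* a CNOT circuit on n qubits: list of (control, target) pairs, applied left to right *)
definition valid_cnot_circuit :: "nat \<Rightarrow> (nat \<times> nat) list \<Rightarrow> bool" where
  "valid_cnot_circuit n gs \<longleftrightarrow> (\<forall>(c, t) \<in> set gs. c < n \<and> t < n \<and> c \<noteq> t)"

definition cnot_circuit_op :: "nat \<Rightarrow> (nat \<times> nat) list \<Rightarrow> complex mat" where
  "cnot_circuit_op n gs = foldr (\<lambda>(c, t) A. A * embed2 n cnot_mat c t) gs (1\<^sub>m (2 ^ n))"

definition in_QNC1 :: "(nat \<Rightarrow> complex mat) \<Rightarrow> bool" where
  "in_QNC1 F \<longleftrightarrow> (\<forall>n \<ge> 1. unitary_mat (2 ^ n) (F n)) \<and>
     (\<exists>c1 c2 :: real. \<exists>j :: nat. \<forall>n \<ge> 1. \<exists>m C.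
        valid_circuit (n + m) C \<and> real (length C) \<le> c1 * log 2 (real n) \<and>
        real m \<le> c2 * real n ^ j \<and> embeds n m (F n) (circuit_op (n + m) C))"

end

theory Submission
  imports Defs
begin

lemma qbit_bit: "qbit x q = of_bool (bit x q)"
  by (simp add: qbit_def bit_iff_odd odd_iff_mod_2_eq_one)

lemma nat_bit_eqI: "(\<And>q. bit (x::nat) q = bit y q) \<Longrightarrow> x = y"
  by (simp add: bit_eq_iff)

lemma less_pow_bits: "(x::nat) < 2 ^ N \<longleftrightarrow> (\<forall>q. bit x q \<longrightarrow> q < N)"
proof -
  have "x < 2 ^ N \<longleftrightarrow> take_bit N x = x" by (simp add: take_bit_nat_eq_self_iff)
  also have "\<dots> \<longleftrightarrow> (\<forall>q. bit x q \<longrightarrow> q < N)"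
    by (auto simp: bit_eq_iff bit_take_bit_iff)
  finally show ?thesis .
qed

definition cnotf :: "nat \<Rightarrow> nat \<Rightarrow> nat \<Rightarrow> nat" where
  "cnotf c t x = (if bit x c then flip_bit t x else x)"

lemma bit_cnotf: "bit (cnotf c t x) q = (if q = t then bit x q \<noteq> bit x c else bit x q)"
  by (auto simp: cnotf_def bit_flip_bit_iff)

lemma cnotf_inv: "c \<noteq> t \<Longrightarrow> cnotf c t (cnotf c t x) = x"
  by (rule nat_bit_eqI) (auto simp: bit_cnotf)

lemma cnotf_less: "t < N \<Longrightarrow> x < 2 ^ N \<Longrightarrow> cnotf c t x < 2 ^ N"
  by (auto simp: less_pow_bits bit_cnotf split: if_splits)

definition pm :: "nat \<Rightarrow> (nat \<Rightarrow> nat) \<Rightarrow> complex mat" where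
  "pm N f = mat (2 ^ N) (2 ^ N) (\<lambda>(x, y). if x = f y then 1 else 0)"

lemma pm_carrier[simp]: "pm N f \<in> carrier_mat (2^N) (2^N)"
  by (simp add: pm_def)

lemma pm_dims[simp]: "dim_row (pm N f) = 2^N" "dim_col (pm N f) = 2^N"
  by (simp_all add: pm_def)

lemma pm_index[simp]: "x < 2^N \<Longrightarrow> y < 2^N \<Longrightarrow> pm N f $$ (x, y) = (if x = f y then 1 else 0)"
  by (simp add: pm_def)

lemma pm_mult:
  assumes "\<And>y. y < 2^N \<Longrightarrow> g y < 2^N"
  shows "pm N f * pm N g = pm N (f \<circ> g)"
proof (rule eq_matI)
  fix i j assume i: "i < dim_row (pm N (f \<circ> g))" and j: "j < dim_col (pm N (f \<circ> g))"
  have gj: "g j < 2^N" using assms j by simp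
  have "(pm N f * pm N g) $$ (i, j) = (\<Sum>k = 0..<2^N. pm N f $$ (i, k) * pm N g $$ (k, j))"
    using i j by (simp add: scalar_prod_def)
  also have "\<dots> = (\<Sum>k = 0..<2^N. if k = g j then (if i = f k then 1 else 0) else 0)"
    using i j by (intro sum.cong) auto
  also have "\<dots> = (if i = f (g j) then 1 else 0)"
    using gj by (simp add: sum.delta')
  finally show "(pm N f * pm N g) $$ (i, j) = pm N (f \<circ> g) $$ (i, j)" using i j by simp
qed auto

lemma pm_id: "pm N id = 1\<^sub>m (2^N)"
  by (rule eq_matI) auto

lemma pm_id': "pm N (\<lambda>x. x) = 1\<^sub>m (2^N)"
  by (rule eq_matI) auto

lemma embed2_cnot:
  assumes "c < N" "t < N" "c \<noteq> t"
  shows "embed2 N cnot_mat c t = pm N (cnotf c t)"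
proof (rule eq_matI)
  fix x y assume x: "x < dim_row (pm N (cnotf c t))" and y: "y < dim_col (pm N (cnotf c t))"
  have eq: "x = cnotf c t y \<longleftrightarrow> (\<forall>q. bit x q = bit (cnotf c t y) q)"
    using nat_bit_eqI by auto
  have lt: "2 * qbit a c + qbit a t < 4" for a by (simp add: qbit_bit)
  have ar: "(2 * of_bool a' + of_bool b' = 2 * of_bool a + (of_bool a + of_bool b) mod (2::nat))
      \<longleftrightarrow> a' = a \<and> b' = (b \<noteq> a)" for a b a' b'
    by (cases a; cases b; cases a'; cases b') simp_all
  have ag: "agree_except {c, t} x y \<longleftrightarrow> (\<forall>q. q \<noteq> c \<longrightarrow> q \<noteq> t \<longrightarrow> bit x q = bit y q)"
    by (auto simp: agree_except_def qbit_bit)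
  have split: "(\<forall>q. P q) \<longleftrightarrow> (\<forall>q. q \<noteq> c \<longrightarrow> q \<noteq> t \<longrightarrow> P q) \<and> P c \<and> P t" for P by metis
  have "embed2 N cnot_mat c t $$ (x, y) =
     (if agree_except {c, t} x y \<and> (2 * qbit x c + qbit x t = 2 * qbit y c + (qbit y c + qbit y t) mod 2) then 1 else 0)"
    using x y lt[of y] lt[of x] by (simp add: embed2_def cnot_mat_def qbit_bit)
  also have "\<dots> = (if x = cnotf c t y then 1 else 0)"
    unfolding eq ag qbit_bit ar using assms
    by (subst split[where P="\<lambda>q. bit x q = bit (cnotf c t y) q"]) (auto simp: bit_cnotf)
  finally show "embed2 N cnot_mat c t $$ (x, y) = pm N (cnotf c t) $$ (x, y)" using x y by simp
qed (auto simp: embed2_def)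

definition seqf :: "(nat \<Rightarrow> nat) list \<Rightarrow> nat \<Rightarrow> nat" where
  "seqf fs = foldr (\<lambda>f h. h \<circ> f) fs id"

lemma seqf_simps[simp]: "seqf [] = id" "seqf (f # fs) = seqf fs \<circ> f"
  by (simp_all add: seqf_def)

lemma seqf_append[simp]: "seqf (xs @ ys) = seqf ys \<circ> seqf xs"
  by (induction xs) auto

lemma seqf_rev_cancel:
  assumes "\<And>f x. f \<in> set fs \<Longrightarrow> f (f x) = x"
  shows "seqf (rev fs) (seqf fs x) = x"
  using assms by (induction fs arbitrary: x) auto

lemma seqf_less:
  assumes "\<And>f x. f \<in> set fs \<Longrightarrow> x < B \<Longrightarrow> f x < B" "x < B"
  shows "seqf fs x < B"
  using assms by (induction fs arbitrary: x) auto

definition cf :: "(nat \<times> nat) list \<Rightarrow> nat \<Rightarrow> nat" where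
  "cf L = seqf (map (\<lambda>(c, t). cnotf c t) L)"

lemma cf_simps[simp]: "cf [] = id" "cf ((c,t) # L) = cf L \<circ> cnotf c t"
  by (simp_all add: cf_def)

lemma cf_append[simp]: "cf (xs @ ys) = cf ys \<circ> cf xs"
  by (simp add: cf_def)

lemma cf_less: "valid_cnot_circuit N L \<Longrightarrow> x < 2^N \<Longrightarrow> cf L x < 2^N"
  unfolding cf_def valid_cnot_circuit_def
  by (rule seqf_less) (auto intro: cnotf_less)

lemma cf_rev_cancel: "valid_cnot_circuit N L \<Longrightarrow> cf (rev L) (cf L x) = x"
  unfolding cf_def valid_cnot_circuit_def rev_map[symmetric]
  by (rule seqf_rev_cancel) (auto intro: cnotf_inv)

lemma valid_cnot_rev: "valid_cnot_circuit N (rev L) = valid_cnot_circuit N L"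
  by (simp add: valid_cnot_circuit_def)

lemma cnot_circuit_op_pm: "valid_cnot_circuit N L \<Longrightarrow> cnot_circuit_op N L = pm N (cf L)"
proof (induction L)
  case Nil then show ?case by (simp add: cnot_circuit_op_def pm_id')
next
  case (Cons g L)
  obtain c t where g: "g = (c, t)" by force
  have v: "valid_cnot_circuit N L" "c < N" "t < N" "c \<noteq> t"
    using Cons.prems g by (auto simp: valid_cnot_circuit_def)
  have "cnot_circuit_op N (g # L) = cnot_circuit_op N L * embed2 N cnot_mat c t"
    by (simp add: cnot_circuit_op_def g)
  also have "\<dots> = pm N (cf L) * pm N (cnotf c t)"
    using Cons.IH v embed2_cnot by simp
  also have "\<dots> = pm N (cf (g # L))"
    using v by (simp add: pm_mult cnotf_less g)
  finally show ?case .
qed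

definition cl :: "(nat \<times> nat) list \<Rightarrow> gate list" where
  "cl L = map (\<lambda>(c, t). Gate2 cnot_mat c t) L"

lemma layer_op_cl: "layer_op N (cl L) = cnot_circuit_op N L"
  by (induction L) (auto simp: layer_op_def cnot_circuit_op_def cl_def)

lemma circuit_op_cl:
  assumes "\<forall>L \<in> set Ls. valid_cnot_circuit N L"
  shows "circuit_op N (map cl Ls) = pm N (seqf (map cf Ls))"
  using assms
proof (induction Ls)
  case Nil then show ?case by (simp add: circuit_op_def pm_id')
next
  case (Cons L Ls)
  have "circuit_op N (map cl (L # Ls)) = circuit_op N (map cl Ls) * layer_op N (cl L)"
    by (simp add: circuit_op_def)
  also have "\<dots> = pm N (seqf (map cf Ls)) * pm N (cf L)"
    using Cons by (simp add: layer_op_cl cnot_circuit_op_pm)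
  also have "\<dots> = pm N (seqf (map cf (L # Ls)))"
    using Cons.prems by (simp add: pm_mult cf_less)
  finally show ?case .
qed

lemma unitary_pm:
  assumes "\<And>x. x < 2^N \<Longrightarrow> f x < 2^N" "\<And>x. x < 2^N \<Longrightarrow> g x < 2^N"
    "\<And>x. x < 2^N \<Longrightarrow> f (g x) = x" "\<And>x. x < 2^N \<Longrightarrow> g (f x) = x"
  shows "unitary_mat (2^N) (pm N f)"
proof -
  have adj: "mat_adjoint (pm N f) = pm N g"
  proof (rule eq_matI)
    fix i j assume i: "i < dim_row (pm N g)" and j: "j < dim_col (pm N g)"
    have "(j = f i) = (i = g j)" using assms i j by auto
    then show "mat_adjoint (pm N f) $$ (i, j) = pm N g $$ (i, j)"
      using i j by (simp add: mat_adjoint_def mat_of_rows_def)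
  qed (simp_all add: mat_adjoint_def)
  have fg: "pm N (f \<circ> g) = 1\<^sub>m (2^N)" "pm N (g \<circ> f) = 1\<^sub>m (2^N)"
    using assms by (auto intro!: eq_matI)
  show ?thesis unfolding unitary_mat_def adj
    using assms fg by (simp add: pm_mult)
qed

lemma cnot_mat_pm: "cnot_mat = pm 2 (cnotf 1 0)"
proof (rule eq_matI)
  fix i j assume i: "i < dim_row (pm 2 (cnotf 1 0))" and j: "j < dim_col (pm 2 (cnotf 1 0))"
  have "i < 4" "j < 4" using i j by auto
  then have "i \<in> {0,1,2,3}" "j \<in> {0,1,2,3}" by auto
  then show "cnot_mat $$ (i, j) = pm 2 (cnotf 1 0) $$ (i, j)"
    by (auto simp: cnot_mat_def cnotf_def bit_0)
qed (auto simp: cnot_mat_def)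

lemma unitary_cnot: "unitary_mat 4 cnot_mat"
proof -
  have l: "x < 2^2 \<Longrightarrow> cnotf 1 0 x < 2^2" for x by (rule cnotf_less) simp_all
  have i: "x < 2^2 \<Longrightarrow> cnotf 1 0 (cnotf 1 0 x) = x" for x by (rule cnotf_inv) simp
  have "unitary_mat (2^2) (pm 2 (cnotf 1 0))"
    by (rule unitary_pm[OF l l i i])
  moreover have e: "(2::nat)^2 = 4" by simp
  ultimately show ?thesis unfolding cnot_mat_pm by (simp only: e)
qed

lemma unitary_cnot_circuit:
  assumes "valid_cnot_circuit N L"
  shows "unitary_mat (2^N) (cnot_circuit_op N L)"
proof -
  have v': "valid_cnot_circuit N (rev L)" using assms by (simp add: valid_cnot_rev)
  have c2: "cf L (cf (rev L) x) = x" for x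
    using cf_rev_cancel[OF v', of x] by simp
  show ?thesis unfolding cnot_circuit_op_pm[OF assms]
    by (rule unitary_pm[where g="cf (rev L)"]) (auto simp: cf_less assms v' cf_rev_cancel[OF assms] c2)
qed

lemma embeds_pm:
  assumes "\<And>x. x < 2^n \<Longrightarrow> F x = G x" "\<And>x. x < 2^n \<Longrightarrow> G x < 2^n"
  shows "embeds n m (pm n G) (pm (n + m) F)"
  unfolding embeds_def
proof (intro conjI ballI)
  fix \<psi> :: "complex vec" assume \<psi>: "\<psi> \<in> carrier_vec (2 ^ n)"
  have le: "(2::nat)^n \<le> 2^(n+m)" by (simp add: power_increasing)
  show "pm (n + m) F *\<^sub>v ext_anc n m \<psi> = ext_anc n m (pm n G *\<^sub>v \<psi>)"
  proof (rule eq_vecI)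
    fix x assume x: "x < dim_vec (ext_anc n m (pm n G *\<^sub>v \<psi>))"
    then have x': "x < 2^(n+m)" by (simp add: ext_anc_def)
    have "(pm (n + m) F *\<^sub>v ext_anc n m \<psi>) $ x =
        (\<Sum>y = 0..<2^(n+m). (if x = F y then 1 else 0) * (if y < 2^n then \<psi> $ y else 0))"
      using x' by (simp add: scalar_prod_def ext_anc_def)
    also have "\<dots> = (\<Sum>y = 0..<2^n. (if x = G y then \<psi> $ y else 0))"
      using le assms(1) by (intro sum.mono_neutral_cong_right) auto
    also have "\<dots> = ext_anc n m (pm n G *\<^sub>v \<psi>) $ x"
    proof (cases "x < 2^n")
      case True then show ?thesis using x' \<psi> by (simp add: ext_anc_def scalar_prod_def; intro sum.cong; auto)
    next
      case False
      then have "(\<Sum>y = 0..<2^n. (if x = G y then \<psi> $ y else 0)) = 0"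
        using assms(2) by (intro sum.neutral) (metis atLeastLessThan_iff)
      then show ?thesis using False x' by (simp add: ext_anc_def)
    qed
    finally show "(pm (n + m) F *\<^sub>v ext_anc n m \<psi>) $ x = ext_anc n m (pm n G *\<^sub>v \<psi>) $ x" .
  qed (simp add: ext_anc_def)
qed simp_all

fun disjl :: "(nat \<times> nat) list \<Rightarrow> bool" where
  "disjl [] = True"
| "disjl ((c, t) # L) = (c \<noteq> t \<and> (\<forall>(c', t') \<in> set L. {c, t} \<inter> {c', t'} = {}) \<and> disjl L)"

lemma cf_bit_nontarget: "q \<notin> snd ` set L \<Longrightarrow> bit (cf L x) q = bit x q"
  by (induction L arbitrary: x) (auto simp: bit_cnotf)

lemma disjl_ctrl: "disjl L \<Longrightarrow> (c, t) \<in> set L \<Longrightarrow> c \<notin> snd ` set L"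
proof (induction L rule: disjl.induct)
  case 1 then show ?case by simp
next
  case (2 c' t' L)
  show ?case
  proof (cases "(c, t) = (c', t')")
    case True
    have "c \<noteq> t''" if "(c'', t'') \<in> set L" for c'' t''
      using 2(2) that True by fastforce
    then have "c \<notin> snd ` set L" by force
    then show ?thesis using True 2(2) by auto
  next
    case False
    then have m: "(c, t) \<in> set L" using 2(3) by auto
    then have "c \<noteq> t'" using 2(2) by fastforce
    then show ?thesis using 2 m by auto
  qed
qed

lemma cf_bit_target: "disjl L \<Longrightarrow> (c, t) \<in> set L \<Longrightarrow> bit (cf L x) t = (bit x t \<noteq> bit x c)"
proof (induction L arbitrary: x rule: disjl.induct)
  case 1 then show ?case by simp
next
  case (2 c' t' L)
  show ?case
  proof (cases "(c, t) = (c', t')")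
    case True
    have "t \<notin> snd ` set L" using 2(2) True by fastforce
    then show ?thesis using True 2(2) by (simp add: cf_bit_nontarget bit_cnotf)
  next
    case False
    then have m: "(c, t) \<in> set L" using 2(3) by auto
    then have "t \<noteq> t'" "c \<noteq> t'" using 2(2) by fastforce+
    then show ?thesis using 2 m by (simp add: bit_cnotf)
  qed
qed

lemma cf_invol: assumes "disjl L" shows "cf L (cf L x) = x"
proof (rule nat_bit_eqI)
  fix q show "bit (cf L (cf L x)) q = bit x q"
  proof (cases "q \<in> snd ` set L")
    case True
    then obtain c where m: "(c, q) \<in> set L" by force
    have "c \<notin> snd ` set L" using disjl_ctrl[OF assms m] .
    then have "bit (cf L x) c = bit x c" by (rule cf_bit_nontarget)
    then show ?thesis using cf_bit_target[OF assms m, of "cf L x"] cf_bit_target[OF assms m, of x] by auto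
  next
    case False then show ?thesis by (simp add: cf_bit_nontarget)
  qed
qed

lemma disjl_map:
  assumes "distinct xs" "\<forall>a\<in>set xs. fst (g a) \<noteq> snd (g a)"
    "\<forall>a\<in>set xs. \<forall>b\<in>set xs. a \<noteq> b \<longrightarrow> {fst (g a), snd (g a)} \<inter> {fst (g b), snd (g b)} = {}"
  shows "disjl (map g xs)"
  using assms
proof (induction xs)
  case Nil then show ?case by simp
next
  case (Cons a xs)
  obtain c t where g: "g a = (c, t)" by force
  have "\<forall>(c', t') \<in> set (map g xs). {c, t} \<inter> {c', t'} = {}"
  proof
    fix p assume "p \<in> set (map g xs)"
    then obtain b where b: "b \<in> set xs" "p = g b" by auto
    then have "a \<noteq> b" using Cons.prems(1) by auto
    then have "{fst (g a), snd (g a)} \<inter> {fst (g b), snd (g b)} = {}" using Cons.prems(3) b by auto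
    then show "case p of (c', t') \<Rightarrow> {c, t} \<inter> {c', t'} = {}" using g b by (auto split: prod.splits)
  qed
  then show ?case using Cons g by auto
qed

lemma disjl_nth:
  assumes "disjl L" "i < length L" "j < length L" "i \<noteq> j"
  shows "{fst (L ! i), snd (L ! i)} \<inter> {fst (L ! j), snd (L ! j)} = {}"
  using assms
proof (induction L arbitrary: i j rule: disjl.induct)
  case 1 then show ?case by simp
next
  case (2 c t L)
  show ?case
  proof (cases i)
    case 0
    then obtain j' where j: "j = Suc j'" "j' < length L" using 2 by (cases j) auto
    obtain c' t' where e: "L ! j' = (c', t')" by force
    have "L ! j' \<in> set L" using j by simp
    then have "{c, t} \<inter> {c', t'} = {}" using 2(2) e by auto
    then show ?thesis using 0 j e by simp
  next
    case (Suc i')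
    show ?thesis
    proof (cases j)
      case 0
      obtain c' t' where e: "L ! i' = (c', t')" by force
      have "L ! i' \<in> set L" using Suc 2 by simp
      then have "{c, t} \<inter> {c', t'} = {}" using 2(2) e by auto
      then show ?thesis using 0 Suc e by auto
    next
      case (Suc j')
      then show ?thesis using 2 \<open>i = Suc i'\<close> by auto
    qed
  qed
qed

lemma disjl_ne: "disjl L \<Longrightarrow> (c, t) \<in> set L \<Longrightarrow> c \<noteq> t"
  by (induction L rule: disjl.induct) auto

lemma valid_layer_cl:
  assumes "disjl L" "\<forall>(c, t) \<in> set L. c < N \<and> t < N"
  shows "valid_layer N (cl L)"
  unfolding valid_layer_def
proof (intro conjI allI impI ballI)
  fix g assume "g \<in> set (cl L)"
  then obtain c t where "(c, t) \<in> set L" "g = Gate2 cnot_mat c t" by (auto simp: cl_def)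
  then show "valid_gate N g" using assms disjl_ne[OF assms(1)] by (auto simp: unitary_cnot)
next
  fix i j assume "i < length (cl L)" "j < length (cl L)" "i \<noteq> j"
  then show "gate_support (cl L ! i) \<inter> gate_support (cl L ! j) = {}"
    using disjl_nth[OF assms(1), of i j] by (auto simp: cl_def split: prod.splits)
qed

lemma valid_cnot_of_disjl:
  "disjl L \<Longrightarrow> \<forall>(c, t) \<in> set L. c < N \<and> t < N \<Longrightarrow> valid_cnot_circuit N L"
  using disjl_ne unfolding valid_cnot_circuit_def by fast

definition loc :: "nat set \<Rightarrow> (nat \<Rightarrow> nat) \<Rightarrow> bool" where
  "loc V f \<longleftrightarrow> (\<forall>x q. q \<notin> V \<longrightarrow> bit (f x) q = bit x q) \<and>
     (\<forall>x y. (\<forall>q\<in>V. bit x q = bit y q) \<longrightarrow> (\<forall>q\<in>V. bit (f x) q = bit (f y) q))"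

lemma loc_id: "loc V id" by (simp add: loc_def)

lemma loc_comp: "loc V f \<Longrightarrow> loc V g \<Longrightarrow> loc V (g \<circ> f)"
  unfolding loc_def by simp

lemma loc_cnotf: "c \<in> V \<Longrightarrow> t \<in> V \<Longrightarrow> loc V (cnotf c t)"
  unfolding loc_def by (auto simp: bit_cnotf)

lemma loc_seqf: "\<forall>f\<in>set fs. loc V f \<Longrightarrow> loc V (seqf fs)"
  by (induction fs) (auto intro: loc_comp loc_id)

lemma loc_cf: "\<forall>(c, t) \<in> set L. c \<in> V \<and> t \<in> V \<Longrightarrow> loc V (cf L)"
  unfolding cf_def by (rule loc_seqf) (auto intro: loc_cnotf)

lemma sandwich:
  assumes inv0: "\<forall>f\<in>set fs. \<forall>x. f (f x) = x"
    and lc: "\<forall>f\<in>set fs. loc V f"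
    and mu0: "\<forall>y. \<forall>q\<in>V. bit (\<mu> y) q = bit y q"
  shows "q \<in> V \<Longrightarrow> bit (seqf (rev fs) (\<mu> (seqf fs b))) q = bit b q"
    and "q \<notin> V \<Longrightarrow> bit (seqf (rev fs) (\<mu> (seqf fs b))) q = bit (\<mu> (seqf fs b)) q"
    and "q \<notin> V \<Longrightarrow> bit (seqf fs b) q = bit b q"
proof -
  have inv: "\<And>f x. f \<in> set fs \<Longrightarrow> f (f x) = x" using inv0 by blast
  have mu: "\<And>y q. q \<in> V \<Longrightarrow> bit (\<mu> y) q = bit y q" using mu0 by blast
  have l1: "loc V (seqf fs)" "loc V (seqf (rev fs))" using lc by (auto intro: loc_seqf)
  have bk: "seqf (rev fs) (seqf fs b) = b" using seqf_rev_cancel inv by blast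
  {
    assume q: "q \<in> V"
    have "\<forall>q\<in>V. bit (\<mu> (seqf fs b)) q = bit (seqf fs b) q" using mu by simp
    then have "\<forall>q\<in>V. bit (seqf (rev fs) (\<mu> (seqf fs b))) q = bit (seqf (rev fs) (seqf fs b)) q"
      using l1(2) unfolding loc_def by blast
    then show "bit (seqf (rev fs) (\<mu> (seqf fs b))) q = bit b q" using q bk by simp
  }
  show "q \<notin> V \<Longrightarrow> bit (seqf (rev fs) (\<mu> (seqf fs b))) q = bit (\<mu> (seqf fs b)) q"
    using l1(2) unfolding loc_def by blast
  show "q \<notin> V \<Longrightarrow> bit (seqf fs b) q = bit b q"
    using l1(1) unfolding loc_def by blast
qed

locale par =
  fixes n K :: nat and s tg :: "nat \<Rightarrow> nat" and w z :: "nat \<Rightarrow> nat \<Rightarrow> nat" and S :: "nat \<Rightarrow> nat set"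
  assumes nP: "n \<le> 2^K"
  and S_sub: "\<And>j. j < n \<Longrightarrow> S j \<subseteq> {..<n}"
  and s_inj: "\<And>i i'. i < n \<Longrightarrow> i' < n \<Longrightarrow> s i = s i' \<longleftrightarrow> i = i'"
  and tg_inj: "\<And>i i'. i < n \<Longrightarrow> i' < n \<Longrightarrow> tg i = tg i' \<longleftrightarrow> i = i'"
  and w_inj: "\<And>i j i' j'. i < n \<Longrightarrow> j < 2^K \<Longrightarrow> i' < n \<Longrightarrow> j' < 2^K \<Longrightarrow> w i j = w i' j' \<longleftrightarrow> i = i' \<and> j = j'"
  and z_inj: "\<And>i j i' j'. i < 2^K \<Longrightarrow> j < n \<Longrightarrow> i' < 2^K \<Longrightarrow> j' < n \<Longrightarrow> z i j = z i' j' \<longleftrightarrow> i = i' \<and> j = j'"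
  and s_tg: "\<And>i j. i < n \<Longrightarrow> j < n \<Longrightarrow> s i \<noteq> tg j"
  and s_w: "\<And>i i' j'. i < n \<Longrightarrow> i' < n \<Longrightarrow> j' < 2^K \<Longrightarrow> s i \<noteq> w i' j'"
  and s_z: "\<And>i i' j'. i < n \<Longrightarrow> i' < 2^K \<Longrightarrow> j' < n \<Longrightarrow> s i \<noteq> z i' j'"
  and tg_w: "\<And>i i' j'. i < n \<Longrightarrow> i' < n \<Longrightarrow> j' < 2^K \<Longrightarrow> tg i \<noteq> w i' j'"
  and tg_z: "\<And>i i' j'. i < n \<Longrightarrow> i' < 2^K \<Longrightarrow> j' < n \<Longrightarrow> tg i \<noteq> z i' j'"
  and w_z: "\<And>i j i' j'. i < n \<Longrightarrow> j < 2^K \<Longrightarrow> i' < 2^K \<Longrightarrow> j' < n \<Longrightarrow> w i j \<noteq> z i' j'"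
begin

lemmas neqs = s_tg s_w s_z tg_w tg_z w_z
lemmas neqs' = s_tg[symmetric] s_w[symmetric] s_z[symmetric] tg_w[symmetric] tg_z[symmetric] w_z[symmetric]
lemmas injs = s_inj tg_inj w_inj z_inj

definition V :: "nat set" where
  "V = s ` {..<n} \<union> (\<lambda>(i, j). w i j) ` ({..<n} \<times> {..<2^K}) \<union> (\<lambda>(i, j). z i j) ` ({..<2^K} \<times> {..<n})"

lemma V_mem: "i < n \<Longrightarrow> s i \<in> V" "i < n \<Longrightarrow> j < 2^K \<Longrightarrow> w i j \<in> V" "i < 2^K \<Longrightarrow> j < n \<Longrightarrow> z i j \<in> V"
  unfolding V_def by force+

lemma tg_notin_V: "j < n \<Longrightarrow> tg j \<notin> V"
proof
  assume j: "j < n" and "tg j \<in> V"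
  then consider i where "i < n" "tg j = s i" | i j' where "i < n" "j' < 2^K" "tg j = w i j'"
    | i j' where "i < 2^K" "j' < n" "tg j = z i j'"
    unfolding V_def by auto
  then show False using j neqs' by cases metis+
qed

definition A0 :: "(nat \<times> nat) list" where
  "A0 = map (\<lambda>i. (s i, w i 0)) [0..<n]"

definition Fl :: "nat \<Rightarrow> (nat \<times> nat) list" where
  "Fl r = map (\<lambda>(i, j). (w i j, w i (j + 2^r))) (List.product [0..<n] [0..<2^r])"

definition Ml :: "(nat \<times> nat) list" where
  "Ml = map (\<lambda>(i, j). (w i j, z i j)) (filter (\<lambda>(i, j). i \<in> S j) (List.product [0..<n] [0..<n]))"

definition Tl :: "nat \<Rightarrow> (nat \<times> nat) list" where
  "Tl r = map (\<lambda>(k, j). (z (2 * k * 2^r + 2^r) j, z (2 * k * 2^r) j)) (List.product [0..<2^(K - Suc r)] [0..<n])"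

definition Mid :: "(nat \<times> nat) list" where
  "Mid = map (\<lambda>j. (z 0 j, tg j)) [0..<n]"

definition Fwd :: "(nat \<times> nat) list list" where
  "Fwd = [A0] @ map Fl [0..<K] @ [Ml] @ map Tl [0..<K]"

definition parL :: "(nat \<times> nat) list list" where
  "parL = Fwd @ [Mid] @ rev Fwd"

lemma length_parL: "length parL = 4 * K + 5"
  by (simp add: parL_def Fwd_def)

lemma pow_le: assumes "r < K" shows "2 * 2^r \<le> (2::nat)^K"
proof -
  have "(2::nat)^Suc r \<le> 2^K" by (rule power_increasing) (use assms in auto)
  then show ?thesis by simp
qed

lemma pow_split: assumes "r < K" shows "(2::nat)^K = 2^(K - Suc r) * 2^Suc r"
proof -
  have e: "K - Suc r + Suc r = K" using assms by simp
  have "(2::nat)^(K - Suc r) * 2^Suc r = 2^(K - Suc r + Suc r)" by (simp only: power_add)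
  then show ?thesis unfolding e by simp
qed

lemma tree_bound: "r < K \<Longrightarrow> k < 2^(K - Suc r) \<Longrightarrow> 2 * k * 2^r + 2^r < (2::nat)^K"
proof -
  assume r: "r < K" and k: "k < 2^(K - Suc r)"
  have "2 * k * 2^r + 2^r < 2 * (k + 1) * 2^r" by simp
  also have "\<dots> \<le> 2 * 2^(K - Suc r) * 2^r"
  proof -
    have "k + 1 \<le> 2^(K - Suc r)" using k by simp
    then show ?thesis by (metis mult_le_mono1 mult_le_mono2)
  qed
  also have "\<dots> = 2^K" using pow_split[OF r] by simp
  finally show ?thesis .
qed

lemma disjl_A0: "disjl A0"
  unfolding A0_def by (rule disjl_map) (auto simp: neqs neqs' injs)

lemma disjl_Fl: "r < K \<Longrightarrow> disjl (Fl r)"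
  unfolding Fl_def
proof (rule disjl_map)
  assume r: "r < K"
  have b: "j < 2^r \<Longrightarrow> j + 2^r < 2^K" "j < 2^r \<Longrightarrow> j < 2^K" for j :: nat
    using pow_le[OF r] by auto
  show "\<forall>a\<in>set (List.product [0..<n] [0..<2 ^ r]). fst (case a of (i, j) \<Rightarrow> (w i j, w i (j + 2 ^ r))) \<noteq> snd (case a of (i, j) \<Rightarrow> (w i j, w i (j + 2 ^ r)))"
    using b by (auto simp: injs)
  show "\<forall>a\<in>set (List.product [0..<n] [0..<2 ^ r]). \<forall>b\<in>set (List.product [0..<n] [0..<2 ^ r]). a \<noteq> b \<longrightarrow> {fst (case a of (i, j) \<Rightarrow> (w i j, w i (j + 2 ^ r))), snd (case a of (i, j) \<Rightarrow> (w i j, w i (j + 2 ^ r)))} \<inter> {fst (case b of (i, j) \<Rightarrow> (w i j, w i (j + 2 ^ r))), snd (case b of (i, j) \<Rightarrow> (w i j, w i (j + 2 ^ r)))} = {}"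
    using b by (auto simp: injs)
qed (simp add: distinct_product)

lemma disjl_Ml: "disjl Ml"
  unfolding Ml_def
proof (rule disjl_map)
  have b: "j < n \<Longrightarrow> j < 2^K" for j using nP by auto
  show "\<forall>a\<in>set (filter (\<lambda>(i, j). i \<in> S j) (List.product [0..<n] [0..<n])). fst (case a of (i, j) \<Rightarrow> (w i j, z i j)) \<noteq> snd (case a of (i, j) \<Rightarrow> (w i j, z i j))"
    using b by (auto simp: neqs)
  show "\<forall>a\<in>set (filter (\<lambda>(i, j). i \<in> S j) (List.product [0..<n] [0..<n])). \<forall>b\<in>set (filter (\<lambda>(i, j). i \<in> S j) (List.product [0..<n] [0..<n])). a \<noteq> b \<longrightarrow> {fst (case a of (i, j) \<Rightarrow> (w i j, z i j)), snd (case a of (i, j) \<Rightarrow> (w i j, z i j))} \<inter> {fst (case b of (i, j) \<Rightarrow> (w i j, z i j)), snd (case b of (i, j) \<Rightarrow> (w i j, z i j))} = {}"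
    using b by (auto simp: neqs neqs' injs)
qed (simp add: distinct_product)

lemma arith1: "(p::nat) > 0 \<Longrightarrow> 2 * k * p + p \<noteq> 2 * k' * p"
proof
  assume p: "p > 0" and e: "2 * k * p + p = 2 * k' * p"
  then have "(2 * k + 1) * p = (2 * k') * p" by (simp add: algebra_simps)
  then have "2 * k + 1 = 2 * k'" using p by (metis mult_right_cancel neq0_conv)
  then show False by presburger
qed

lemma disjl_Tl: "r < K \<Longrightarrow> disjl (Tl r)"
  unfolding Tl_def
proof (rule disjl_map)
  assume r: "r < K"
  have b: "k < 2^(K - Suc r) \<Longrightarrow> 2 * k * 2^r + 2^r < 2^K" "k < 2^(K - Suc r) \<Longrightarrow> 2 * k * 2^r < 2^K" for k :: nat
    using tree_bound[OF r] by (auto simp del: power_Suc) (metis add_lessD1 tree_bound[OF r])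
  have a: "2 * k * 2^r + 2^r \<noteq> 2 * k' * 2^r" for k k' :: nat by (rule arith1) simp
  show "\<forall>a\<in>set (List.product [0..<2 ^ (K - Suc r)] [0..<n]). fst (case a of (k, j) \<Rightarrow> (z (2 * k * 2 ^ r + 2 ^ r) j, z (2 * k * 2 ^ r) j)) \<noteq> snd (case a of (k, j) \<Rightarrow> (z (2 * k * 2 ^ r + 2 ^ r) j, z (2 * k * 2 ^ r) j))"
    using b a by (auto simp: injs)
  show "\<forall>x\<in>set (List.product [0..<2 ^ (K - Suc r)] [0..<n]). \<forall>y\<in>set (List.product [0..<2 ^ (K - Suc r)] [0..<n]). x \<noteq> y \<longrightarrow> {fst (case x of (k, j) \<Rightarrow> (z (2 * k * 2 ^ r + 2 ^ r) j, z (2 * k * 2 ^ r) j)), snd (case x of (k, j) \<Rightarrow> (z (2 * k * 2 ^ r + 2 ^ r) j, z (2 * k * 2 ^ r) j))} \<inter> {fst (case y of (k, j) \<Rightarrow> (z (2 * k * 2 ^ r + 2 ^ r) j, z (2 * k * 2 ^ r) j)), snd (case y of (k, j) \<Rightarrow> (z (2 * k * 2 ^ r + 2 ^ r) j, z (2 * k * 2 ^ r) j))} = {}"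
    using b a a[symmetric] by (auto simp: injs)
qed (simp add: distinct_product)

lemma disjl_Mid: "disjl Mid"
  unfolding Mid_def by (rule disjl_map) (auto simp: neqs neqs' injs)

end

context par begin

lemma fwd_disjl: "L \<in> set Fwd \<Longrightarrow> disjl L"
  by (auto simp: Fwd_def disjl_A0 disjl_Fl disjl_Ml disjl_Tl)

lemma fwd_in_V: "L \<in> set Fwd \<Longrightarrow> \<forall>(c, t) \<in> set L. c \<in> V \<and> t \<in> V"
proof -
  have K0: "0 < (2::nat)^K" by simp
  have nK: "i < n \<Longrightarrow> i < 2^K" for i using nP by auto
  assume "L \<in> set Fwd"
  then consider "L = A0" | r where "r < K" "L = Fl r" | "L = Ml" | r where "r < K" "L = Tl r"
    by (auto simp: Fwd_def)
  then show ?thesis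
  proof cases
    case 1 then show ?thesis using K0 by (auto simp: A0_def V_mem)
  next
    case (2 r)
    have b: "j < 2^r \<Longrightarrow> j + 2^r < 2^K" "j < 2^r \<Longrightarrow> j < 2^K" for j :: nat
      using pow_le[OF 2(1)] by auto
    then show ?thesis using 2 by (auto simp: Fl_def V_mem)
  next
    case 3 then show ?thesis using nK by (auto simp: Ml_def V_mem)
  next
    case (4 r)
    have b: "k < 2^(K - Suc r) \<Longrightarrow> 2 * k * 2^r + 2^r < 2^K" "k < 2^(K - Suc r) \<Longrightarrow> 2 * k * 2^r < 2^K" for k :: nat
      using tree_bound[OF 4(1)] by (auto simp del: power_Suc) (metis add_lessD1 tree_bound[OF 4(1)])
    then show ?thesis using 4 by (auto simp: Tl_def V_mem)
  qed
qed

definition zero :: "nat \<Rightarrow> bool" where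
  "zero b \<longleftrightarrow> (\<forall>i<n. \<forall>j<2^K. \<not> bit b (w i j)) \<and> (\<forall>i<2^K. \<forall>j<n. \<not> bit b (z i j))"

definition InvF :: "nat \<Rightarrow> nat \<Rightarrow> nat \<Rightarrow> bool" where
  "InvF b l y \<longleftrightarrow> (\<forall>i<n. \<forall>j<2^K. bit y (w i j) = (bit b (s i) \<and> j < 2^l)) \<and> (\<forall>i<2^K. \<forall>j<n. \<not> bit y (z i j))"

definition InvT :: "nat \<Rightarrow> nat \<Rightarrow> nat \<Rightarrow> bool" where
  "InvT b l y \<longleftrightarrow> (\<forall>j<n. \<forall>i<2^K. 2^l dvd i \<longrightarrow>
      bit y (z i j) = odd (card {i' \<in> S j. i \<le> i' \<and> i' < i + 2^l \<and> bit b (s i')}))"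

lemma InvF_A0: assumes "zero b" shows "InvF b 0 (cf A0 b)"
  unfolding InvF_def
proof (intro conjI allI impI)
  fix i j :: nat assume i: "i < n" and j: "j < 2^K"
  show "bit (cf A0 b) (w i j) = (bit b (s i) \<and> j < 2 ^ 0)"
  proof (cases "j = 0")
    case True
    have "(s i, w i 0) \<in> set A0" using i by (auto simp: A0_def)
    then show ?thesis using cf_bit_target[OF disjl_A0] True assms i j by (simp add: zero_def)
  next
    case False
    have "w i j \<notin> snd ` set A0" using False i j by (auto simp: A0_def injs)
    then show ?thesis using cf_bit_nontarget False assms i j by (simp add: zero_def)
  qed
next
  fix i j :: nat assume i: "i < 2^K" and j: "j < n"
  have "z i j \<notin> snd ` set A0" using i j by (auto simp: A0_def neqs')
  then show "\<not> bit (cf A0 b) (z i j)" using cf_bit_nontarget assms i j by (simp add: zero_def)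
qed

lemma InvF_Fl: assumes r: "r < K" and I: "InvF b r y" shows "InvF b (Suc r) (cf (Fl r) y)"
  unfolding InvF_def
proof (intro conjI allI impI)
  have b: "j < 2^r \<Longrightarrow> j + 2^r < 2^K" "j < 2^r \<Longrightarrow> j < 2^K" for j :: nat
    using pow_le[OF r] by auto
  fix i j :: nat assume i: "i < n" and j: "j < 2^K"
  show "bit (cf (Fl r) y) (w i j) = (bit b (s i) \<and> j < 2 ^ Suc r)"
  proof (cases "2^r \<le> j \<and> j < 2^Suc r")
    case True
    have "(w i (j - 2^r), w i j) \<in> set (Fl r)" unfolding Fl_def using True i
      by (auto intro!: image_eqI[where x="(i, j - 2^r)"])
    moreover have "j - 2^r < 2^K" using j by simp
    ultimately show ?thesis using cf_bit_target[OF disjl_Fl[OF r]] True I i j by (auto simp: InvF_def)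
  next
    case False
    have "w i j \<notin> snd ` set (Fl r)" using False i j b by (auto simp: Fl_def injs)
    then show ?thesis using cf_bit_nontarget False I i j by (auto simp: InvF_def)
  qed
next
  fix i j :: nat assume i: "i < 2^K" and j: "j < n"
  have b: "j < 2^r \<Longrightarrow> j + 2^r < 2^K" "j < 2^r \<Longrightarrow> j < 2^K" for j :: nat
    using pow_le[OF r] by auto
  have "z i j \<notin> snd ` set (Fl r)" using i j b by (auto simp: Fl_def neqs')
  then show "\<not> bit (cf (Fl r) y) (z i j)" using cf_bit_nontarget I i j by (simp add: InvF_def)
qed

lemma InvF_all: "l \<le> K \<Longrightarrow> InvF b 0 y \<Longrightarrow> InvF b l (seqf (map cf (map Fl [0..<l])) y)"
proof (induction l)
  case 0 then show ?case by simp
next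
  case (Suc l)
  then show ?case using InvF_Fl[of l b] by simp
qed

lemma InvT_Ml: assumes I: "InvF b K y" shows "InvT b 0 (cf Ml y)"
  unfolding InvT_def
proof (intro allI impI)
  fix j i :: nat assume j: "j < n" and i: "i < 2^K" and "2^0 dvd i"
  have jK: "j < 2^K" using j nP by auto
  show "bit (cf Ml y) (z i j) = odd (card {i' \<in> S j. i \<le> i' \<and> i' < i + 2 ^ 0 \<and> bit b (s i')})"
  proof (cases "i < n \<and> i \<in> S j")
    case True
    have m: "(w i j, z i j) \<in> set Ml" using True j by (auto simp: Ml_def)
    have e: "{i' \<in> S j. i \<le> i' \<and> i' < i + 2 ^ 0 \<and> bit b (s i')} = (if bit b (s i) then {i} else {})"
      using True by (auto dest: le_antisym simp: less_Suc_eq_le)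
    show ?thesis unfolding e using cf_bit_target[OF disjl_Ml m] True I i j jK by (auto simp: InvF_def)
  next
    case False
    have nt: "z i j \<notin> snd ` set Ml" using False i j nP by (auto simp: Ml_def injs)
    have e: "{i' \<in> S j. i \<le> i' \<and> i' < i + 2 ^ 0 \<and> bit b (s i')} = {}"
      using False S_sub[OF j] by (auto dest: le_antisym simp: less_Suc_eq_le)
    show ?thesis unfolding e using cf_bit_nontarget[OF nt] I i j by (simp add: InvF_def)
  qed
qed

lemma card_split:
  fixes A :: "nat set" and P :: "nat \<Rightarrow> bool"
  assumes "finite A"
  shows "card {x \<in> A. i \<le> x \<and> x < i + 2 * p \<and> P x} =
    card {x \<in> A. i \<le> x \<and> x < i + p \<and> P x} + card {x \<in> A. i + p \<le> x \<and> x < i + p + p \<and> P x}"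
proof -
  have "{x \<in> A. i \<le> x \<and> x < i + 2 * p \<and> P x} =
     {x \<in> A. i \<le> x \<and> x < i + p \<and> P x} \<union> {x \<in> A. i + p \<le> x \<and> x < i + p + p \<and> P x}" by auto
  then show ?thesis using assms by (simp add: card_Un_disjoint disjoint_iff)
qed

lemma InvT_Tl: assumes r: "r < K" and I: "InvT b r y" shows "InvT b (Suc r) (cf (Tl r) y)"
  unfolding InvT_def
proof (intro allI impI)
  fix j i :: nat assume j: "j < n" and i: "i < 2^K" and d: "2^Suc r dvd i"
  define k where "k = i div 2^Suc r"
  have i1: "i = 2^Suc r * k" unfolding k_def using d by (rule dvd_mult_div_cancel[symmetric])
  have ik: "i = 2 * k * 2^r" using i1 by simp
  have KK: "(2::nat)^K = 2^(K - Suc r) * 2^Suc r" using pow_split[OF r] .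
  have k: "k < 2^(K - Suc r)" using i KK ik by (simp add: mult.commute)
  have ip: "i + 2^r < 2^K" using tree_bound[OF r k] ik by simp
  have mem: "(z (i + 2^r) j, z i j) \<in> set (Tl r)" unfolding Tl_def using k j ik
    by (auto intro!: image_eqI[where x="(k, j)"])
  have d1: "2^r dvd i" "2^r dvd i + 2^r" using ik by simp_all
  have fin: "finite (S j)" using S_sub[OF j] finite_subset by blast
  have "bit (cf (Tl r) y) (z i j) = (bit y (z i j) \<noteq> bit y (z (i + 2^r) j))"
    using cf_bit_target[OF disjl_Tl[OF r] mem] .
  also have "\<dots> = odd (card {i' \<in> S j. i \<le> i' \<and> i' < i + 2 ^ Suc r \<and> bit b (s i')})"
    using I j i ip d1 card_split[OF fin, of i "2^r" "\<lambda>x. bit b (s x)"] by (simp add: InvT_def)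
  finally show "bit (cf (Tl r) y) (z i j) = odd (card {i' \<in> S j. i \<le> i' \<and> i' < i + 2 ^ Suc r \<and> bit b (s i')})" .
qed

lemma InvT_all: "l \<le> K \<Longrightarrow> InvT b 0 y \<Longrightarrow> InvT b l (seqf (map cf (map Tl [0..<l])) y)"
proof (induction l)
  case 0 then show ?case by simp
next
  case (Suc l)
  then show ?case using InvT_Tl[of l b] by simp
qed

definition par :: "nat \<Rightarrow> nat \<Rightarrow> bool" where
  "par b j = odd (card {i \<in> S j. bit b (s i)})"

lemma fwd_sem: assumes "zero b" "j < n" shows "bit (seqf (map cf Fwd) b) (z 0 j) = par b j"
proof -
  have "InvT b K (seqf (map cf Fwd) b)"
    unfolding Fwd_def using InvT_all[OF order.refl InvT_Ml[OF InvF_all[OF order.refl InvF_A0[OF assms(1)]]]]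
    by (simp add: comp_def)
  then have "bit (seqf (map cf Fwd) b) (z 0 j) = odd (card {i' \<in> S j. 0 \<le> i' \<and> i' < 0 + 2 ^ K \<and> bit b (s i')})"
    using assms(2) unfolding InvT_def by auto
  also have "{i' \<in> S j. 0 \<le> i' \<and> i' < 0 + 2 ^ K \<and> bit b (s i')} = {i \<in> S j. bit b (s i)}"
    using S_sub[OF assms(2)] nP by auto
  finally show ?thesis by (simp add: par_def)
qed

end

context par begin

lemma parL_disjl: "L \<in> set parL \<Longrightarrow> disjl L"
  by (auto simp: parL_def fwd_disjl disjl_Mid)

lemma parL_pairs: "L \<in> set parL \<Longrightarrow> (c, t) \<in> set L \<Longrightarrow> c \<in> V \<union> tg ` {..<n} \<and> t \<in> V \<union> tg ` {..<n}"
proof -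
  assume L: "L \<in> set parL" and ct: "(c, t) \<in> set L"
  have K0: "0 < (2::nat)^K" by simp
  have nK: "j < n \<Longrightarrow> j < 2^K" for j using nP by auto
  from L consider "L \<in> set Fwd" | "L = Mid" by (auto simp: parL_def)
  then show ?thesis
  proof cases
    case 1 then show ?thesis using fwd_in_V ct by blast
  next
    case 2 then show ?thesis using ct K0 nK by (auto simp: Mid_def V_mem)
  qed
qed

lemma par_sem:
  assumes z: "zero b"
  shows "j < n \<Longrightarrow> bit (seqf (map cf parL) b) (tg j) = (bit b (tg j) \<noteq> par b j)"
    and "q \<notin> tg ` {..<n} \<Longrightarrow> bit (seqf (map cf parL) b) q = bit b q"
proof -
  let ?fs = "map cf Fwd"
  have eq: "seqf (map cf parL) b = seqf (rev ?fs) (cf Mid (seqf ?fs b))"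
    by (simp add: parL_def rev_map)
  have inv: "\<forall>f\<in>set ?fs. \<forall>x. f (f x) = x" using fwd_disjl cf_invol by auto
  have lc: "\<forall>f\<in>set ?fs. loc V f" using fwd_in_V loc_cf by auto
  have tgt: "snd ` set Mid = tg ` {..<n}" by (force simp: Mid_def)
  have mu: "\<forall>y. \<forall>q\<in>V. bit (cf Mid y) q = bit y q"
    using tg_notin_V by (intro allI ballI cf_bit_nontarget) (auto simp: tgt)
  note sw = sandwich[of ?fs V "cf Mid", OF inv lc mu]
  {
    assume j: "j < n"
    have m: "(z 0 j, tg j) \<in> set Mid" using j by (auto simp: Mid_def)
    have "bit (seqf (map cf parL) b) (tg j) = bit (cf Mid (seqf ?fs b)) (tg j)"
      unfolding eq using sw(2) tg_notin_V[OF j] by blast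
    also have "\<dots> = (bit (seqf ?fs b) (tg j) \<noteq> bit (seqf ?fs b) (z 0 j))"
      using cf_bit_target[OF disjl_Mid m] .
    also have "\<dots> = (bit b (tg j) \<noteq> par b j)"
      using sw(3)[OF tg_notin_V[OF j]] fwd_sem[OF z j] by simp
    finally show "bit (seqf (map cf parL) b) (tg j) = (bit b (tg j) \<noteq> par b j)" .
  }
  {
    assume q: "q \<notin> tg ` {..<n}"
    show "bit (seqf (map cf parL) b) q = bit b q"
    proof (cases "q \<in> V")
      case True then show ?thesis unfolding eq using sw(1) by blast
    next
      case False
      have "bit (seqf (map cf parL) b) q = bit (cf Mid (seqf ?fs b)) q"
        unfolding eq using sw(2) False by blast
      also have "\<dots> = bit (seqf ?fs b) q" using q tgt cf_bit_nontarget by metis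
      also have "\<dots> = bit b q" using sw(3) False by blast
      finally show ?thesis .
    qed
  }
qed

end

definition symd :: "nat set \<Rightarrow> nat \<Rightarrow> nat set" where
  "symd U e = (if e \<in> U then U - {e} else insert e U)"

lemma odd_symd: "finite U \<Longrightarrow> odd (card (symd U e)) = (\<not> odd (card U))"
proof (cases "e \<in> U")
  case True
  assume f: "finite U"
  then have "card U = Suc (card (U - {e}))" using True by (metis card_Suc_Diff1)
  then show ?thesis using True by (simp add: symd_def)
next
  case False
  assume "finite U"
  then show ?thesis using False by (simp add: symd_def)
qed

lemma linear_sets:
  assumes "valid_cnot_circuit n gs"
  shows "\<exists>A. (\<forall>j<n. A j \<subseteq> {..<n}) \<and> (\<forall>x j. j < n \<longrightarrow> bit (cf gs x) j = odd (card {i \<in> A j. bit x i}))"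
  using assms
proof (induction gs)
  case Nil
  have e: "{i \<in> {j}. bit x i} = (if bit x j then {j} else {})" for x j :: nat by auto
  show ?case by (rule exI[where x="\<lambda>j. {j}"]) (simp only: e, simp)
next
  case (Cons g gs)
  obtain c t where g: "g = (c, t)" by force
  have v: "valid_cnot_circuit n gs" "c < n" "t < n" "c \<noteq> t"
    using Cons.prems g by (auto simp: valid_cnot_circuit_def)
  obtain A where A: "\<forall>j<n. A j \<subseteq> {..<n}" "\<forall>x j. j < n \<longrightarrow> bit (cf gs x) j = odd (card {i \<in> A j. bit x i})"
    using Cons.IH v(1) by blast
  define A' where "A' j = (if t \<in> A j then symd (A j) c else A j)" for j
  have A'1: "\<forall>j<n. A' j \<subseteq> {..<n}" using A(1) v(2) by (auto simp: A'_def symd_def)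
  have A'2: "bit (cf (g # gs) x) j = odd (card {i \<in> A' j. bit x i})" if j: "j < n" for x j
  proof -
    have "A j \<subseteq> {..<n}" using A(1) j by blast
    then have "finite (A j)" by (rule finite_subset) simp
    then have fin: "finite {i \<in> A j. bit x i}" by simp
    have "bit (cf (g # gs) x) j = odd (card {i \<in> A j. bit (cnotf c t x) i})"
      using A(2) j g by simp
    also have "\<dots> = odd (card {i \<in> A' j. bit x i})"
    proof (cases "t \<in> A j \<and> bit x c")
      case True
      have e1: "{i \<in> A j. bit (cnotf c t x) i} = symd {i \<in> A j. bit x i} t"
        using True by (auto simp: symd_def bit_cnotf)
      have e2: "{i \<in> A' j. bit x i} = symd {i \<in> A j. bit x i} c"
        using True v(4) by (auto simp: symd_def A'_def)
      show ?thesis unfolding e1 e2 using odd_symd[OF fin] by simp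
    next
      case False
      have "{i \<in> A j. bit (cnotf c t x) i} = {i \<in> A' j. bit x i}"
        using False v(4) by (auto simp: symd_def A'_def bit_cnotf)
      then show ?thesis by simp
    qed
    finally show ?thesis .
  qed
  show ?case using A'1 A'2 by blast
qed

lemma lin_bound: "(i::nat) < a \<Longrightarrow> j < P \<Longrightarrow> i * P + j < a * P"
proof -
  assume "i < a" "j < P"
  then have "i * P + j < Suc i * P" by simp
  also have "\<dots> \<le> a * P" using \<open>i < a\<close> mult_le_mono1[of "Suc i" a P] by simp
  finally show ?thesis .
qed

lemma lin_inj: "(j::nat) < P \<Longrightarrow> j' < P \<Longrightarrow> i * P + j = i' * P + j' \<longleftrightarrow> i = i' \<and> j = j'"
proof
  assume j: "j < P" "j' < P" and e: "i * P + j = i' * P + j'"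
  have "(i * P + j) div P = i" "(i * P + j) mod P = j" using j by auto
  moreover have "(i' * P + j') div P = i'" "(i' * P + j') mod P = j'" using j by auto
  ultimately show "i = i' \<and> j = j'" using e by metis
qed auto

definition ceil_log :: "nat \<Rightarrow> nat" where "ceil_log n = (LEAST k. n \<le> 2^k)"

lemma ceil_log1: "n \<le> 2 ^ ceil_log n"
proof -
  have "n \<le> 2^n" using less_exp[of n] by simp
  then show ?thesis unfolding ceil_log_def by (rule LeastI)
qed

lemma ceil_log2: "0 < ceil_log n \<Longrightarrow> 2 ^ (ceil_log n - 1) < n"
proof -
  assume "0 < ceil_log n"
  then have "ceil_log n - 1 < (LEAST k. n \<le> 2^k)" unfolding ceil_log_def by simp
  then have "\<not> n \<le> 2 ^ (ceil_log n - 1)" by (rule not_less_Least)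
  then show ?thesis by simp
qed

lemma construction:
  assumes n: "n \<ge> 2" and v: "valid_cnot_circuit n gs"
  shows "\<exists>m C. valid_circuit (n + m) C \<and> length C = 8 * ceil_log n + 12 \<and>
     m = n + 2 * n * 2 ^ ceil_log n \<and> embeds n m (cnot_circuit_op n gs) (circuit_op (n + m) C)"
proof -
  define K where "K = ceil_log n"
  define P where "P = (2::nat) ^ K"
  have nP: "n \<le> P" using ceil_log1 by (simp add: P_def K_def)
  define W where "W i j = 2 * n + (i * P + j)" for i j
  define Z where "Z i j = 2 * n + n * P + (j * P + i)" for i j
  obtain A where A: "\<forall>j<n. A j \<subseteq> {..<n}" "\<forall>x j. j < n \<longrightarrow> bit (cf gs x) j = odd (card {i \<in> A j. bit x i})"
    using linear_sets[OF v] by blast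
  have vr: "valid_cnot_circuit n (rev gs)" using v by (simp add: valid_cnot_rev)
  obtain B where B: "\<forall>j<n. B j \<subseteq> {..<n}" "\<forall>x j. j < n \<longrightarrow> bit (cf (rev gs) x) j = odd (card {i \<in> B j. bit x i})"
    using linear_sets[OF vr] by blast
  have Wb: "i < n \<Longrightarrow> j < P \<Longrightarrow> i * P + j < n * P" for i j using lin_bound by blast
  have Zb: "i < P \<Longrightarrow> j < n \<Longrightarrow> j * P + i < n * P" for i j using lin_bound by blast
  have nn: "n * P \<le> 2 * n * P" by simp
  have Wb2: "i < n \<Longrightarrow> j < P \<Longrightarrow> i * P + j < 2 * n * P" for i j using Wb nn less_le_trans by blast
  have li: "j < 2^K \<Longrightarrow> j' < 2^K \<Longrightarrow> i * 2^K + j = i' * 2^K + j' \<longleftrightarrow> i = i' \<and> j = j'" for i j i' j' :: nat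
    using lin_inj by blast
  interpret p1: par n K "\<lambda>i. i" "\<lambda>j. n + j" W Z A
  proof (unfold_locales, goal_cases)
    case 1 then show ?case using nP by (simp add: P_def)
  next
    case 2 then show ?case using A(1) by blast
  next
    case (5 i j i' j') then show ?case by (simp add: W_def li P_def)
  next
    case (6 i j i' j') then show ?case by (auto simp: Z_def li P_def)
  next
    case (12 i j i' j') then show ?case using Wb[of i j] by (simp add: W_def Z_def P_def)
  qed (auto simp: W_def Z_def)
  interpret p2: par n K "\<lambda>i. n + i" "\<lambda>j. j" W Z B
  proof (unfold_locales, goal_cases)
    case 1 then show ?case using nP by (simp add: P_def)
  next
    case 2 then show ?case using B(1) by blast
  next
    case (5 i j i' j') then show ?case by (simp add: W_def li P_def)
  next
    case (6 i j i' j') then show ?case by (auto simp: Z_def li P_def)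
  next
    case (12 i j i' j') then show ?case using Wb[of i j] by (simp add: W_def Z_def P_def)
  qed (auto simp: W_def Z_def)
  define CP1 where "CP1 = map (\<lambda>j. (n + j, j)) [0..<n]"
  define CP2 where "CP2 = map (\<lambda>j. (j, n + j)) [0..<n]"
  define Ls where "Ls = p1.parL @ p2.parL @ [CP1, CP2]"
  define m where "m = n + 2 * n * P"
  have Nm: "n + m = 2 * n + 2 * n * P" by (simp add: m_def)
  have dCP: "disjl CP1" "disjl CP2" unfolding CP1_def CP2_def by (rule disjl_map; auto)+
  have Vb1: "q \<in> p1.V \<union> (\<lambda>j. n + j) ` {..<n} \<Longrightarrow> q < n + m" for q
    unfolding p1.V_def Nm using Wb2 Zb by (auto simp: W_def Z_def P_def)
  have Vb2: "q \<in> p2.V \<union> (\<lambda>j. j) ` {..<n} \<Longrightarrow> q < n + m" for q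
    unfolding p2.V_def Nm using Wb2 Zb by (auto simp: W_def Z_def P_def)
  have LsV: "disjl L \<and> (\<forall>(c, t) \<in> set L. c < n + m \<and> t < n + m)" if L: "L \<in> set Ls" for L
  proof -
    from L consider "L \<in> set p1.parL" | "L \<in> set p2.parL" | "L = CP1" | "L = CP2"
      by (auto simp: Ls_def)
    then show ?thesis
    proof cases
      case 1 then show ?thesis using p1.parL_disjl p1.parL_pairs Vb1 by blast
    next
      case 2 then show ?thesis using p2.parL_disjl p2.parL_pairs Vb2 by blast
    next
      case 3 then show ?thesis using dCP by (auto simp: CP1_def Nm)
    next
      case 4 then show ?thesis using dCP by (auto simp: CP2_def Nm)
    qed
  qed
  have valid: "valid_circuit (n + m) (map cl Ls)"
    unfolding valid_circuit_def using LsV valid_layer_cl by auto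
  have vLs: "\<forall>L \<in> set Ls. valid_cnot_circuit (n + m) L"
    using LsV valid_cnot_of_disjl by blast
  have len: "length (map cl Ls) = 8 * K + 12"
    by (simp add: Ls_def p1.length_parL p2.length_parL)
  have sem: "seqf (map cf Ls) b = cf gs b" if b: "b < 2^n" for b
  proof -
    have bb: "bit b q \<Longrightarrow> q < n" for q using b less_pow_bits by blast
    have gb: "bit (cf gs b) q \<Longrightarrow> q < n" for q using cf_less[OF v b] less_pow_bits by blast
    define r1 where "r1 = seqf (map cf p1.parL) b"
    define r2 where "r2 = seqf (map cf p2.parL) r1"
    define r3 where "r3 = cf CP1 r2"
    define r4 where "r4 = cf CP2 r3"
    have z1: "p1.zero b" unfolding p1.zero_def W_def Z_def using bb by fastforce
    have r1a: "bit r1 (n + j) = bit (cf gs b) j" if j: "j < n" for j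
    proof -
      have nb: "\<not> bit b (n + j)" using bb[of "n + j"] by auto
      show ?thesis using p1.par_sem(1)[OF z1 j] nb A(2) j by (simp add: r1_def p1.par_def)
    qed
    have r1b: "q \<notin> (\<lambda>j. n + j) ` {..<n} \<Longrightarrow> bit r1 q = bit b q" for q
      using p1.par_sem(2)[OF z1] by (simp add: r1_def)
    have z2: "p2.zero r1" unfolding p2.zero_def
    proof (intro conjI allI impI)
      fix i j :: nat assume "i < n" "j < 2^K"
      have nm: "W i j \<notin> (\<lambda>j. n + j) ` {..<n}" by (auto simp: W_def)
      have "\<not> bit b (W i j)" using bb[of "W i j"] by (auto simp: W_def)
      then show "\<not> bit r1 (W i j)" using r1b[OF nm] by simp
    next
      fix i j :: nat assume "i < 2^K" "j < n"
      have nm: "Z i j \<notin> (\<lambda>j. n + j) ` {..<n}" by (auto simp: Z_def)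
      have "\<not> bit b (Z i j)" using bb[of "Z i j"] by (auto simp: Z_def)
      then show "\<not> bit r1 (Z i j)" using r1b[OF nm] by simp
    qed
    have r2a: "\<not> bit r2 j" if j: "j < n" for j
    proof -
      have "{i \<in> B j. bit r1 (n + i)} = {i \<in> B j. bit (cf gs b) i}"
        using B(1) j r1a by auto
      then have "p2.par r1 j = bit (cf (rev gs) (cf gs b)) j"
        using B(2) j by (simp add: p2.par_def)
      then have "p2.par r1 j = bit b j" using cf_rev_cancel[OF v] by simp
      moreover have "bit r1 j = bit b j"
      proof -
        have "j \<notin> (\<lambda>j. n + j) ` {..<n}" using j by auto
        then show ?thesis by (rule r1b)
      qed
      ultimately show ?thesis using p2.par_sem(1)[OF z2 j] by (simp add: r2_def)
    qed
    have r2b: "q \<ge> n \<Longrightarrow> bit r2 q = bit r1 q" for q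
      using p2.par_sem(2)[OF z2, of q] by (auto simp: r2_def)
    have r3a: "bit r3 j = bit (cf gs b) j" if j: "j < n" for j
    proof -
      have "(n + j, j) \<in> set CP1" using j by (simp add: CP1_def)
      then show ?thesis using cf_bit_target[OF dCP(1)] r2a[OF j] r2b[of "n + j"] r1a[OF j]
        by (simp add: r3_def)
    qed
    have r3b: "q \<ge> n \<Longrightarrow> bit r3 q = bit r2 q" for q
      unfolding r3_def by (rule cf_bit_nontarget) (auto simp: CP1_def)
    have r4: "bit r4 q = bit (cf gs b) q" for q
    proof (cases "q < n")
      case True
      have "q \<notin> snd ` set CP2" using True by (auto simp: CP2_def)
      then show ?thesis using cf_bit_nontarget r3a[OF True] by (simp add: r4_def)
    next
      case False
      show ?thesis
      proof (cases "q < 2 * n")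
        case True
        define j where "j = q - n"
        have j: "j < n" "q = n + j" using True False by (auto simp: j_def)
        have "(j, n + j) \<in> set CP2" using j by (simp add: CP2_def)
        then have "bit r4 q = (bit r3 (n + j) \<noteq> bit r3 j)"
          using cf_bit_target[OF dCP(2)] j by (simp add: r4_def)
        then show ?thesis using r3b[of "n + j"] r2b[of "n + j"] r1a[OF j(1)] r3a[OF j(1)] gb[of q] j
          by auto
      next
        case False2: False
        have "q \<notin> snd ` set CP2" using False2 by (auto simp: CP2_def)
        then have "bit r4 q = bit r3 q" using cf_bit_nontarget by (simp add: r4_def)
        also have "\<dots> = bit b q"
        proof -
          have "q \<notin> (\<lambda>j. n + j) ` {..<n}" using False2 by auto
          then show ?thesis using r3b[of q] r2b[of q] r1b[of q] False by auto
        qed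
        finally show ?thesis using bb[of q] gb[of q] False by auto
      qed
    qed
    have "seqf (map cf Ls) b = r4" by (simp add: Ls_def r1_def r2_def r3_def r4_def)
    then show ?thesis using r4 nat_bit_eqI by metis
  qed
  have emb: "embeds n m (cnot_circuit_op n gs) (circuit_op (n + m) (map cl Ls))"
    unfolding circuit_op_cl[OF vLs] cnot_circuit_op_pm[OF v]
    by (rule embeds_pm) (auto simp: sem cf_less[OF v])
  show ?thesis using valid len emb by (auto simp: m_def P_def K_def)
qed

lemma part1:
  assumes n: "n \<ge> 1" and v: "valid_cnot_circuit n gs"
  shows "\<exists>m C. valid_circuit (n + m) C \<and> real (length C) \<le> 28 * log 2 (real n) \<and>
                   real m \<le> 5 * real n ^ 2 \<and>
                   embeds n m (cnot_circuit_op n gs) (circuit_op (n + m) C)"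
proof (cases "n = 1")
  case True
  have gs: "gs = []"
  proof (cases gs)
    case (Cons g gs')
    obtain c t where "g = (c, t)" by force
    then show ?thesis using v True Cons by (auto simp: valid_cnot_circuit_def)
  qed simp
  have e: "embeds n 0 (cnot_circuit_op n gs) (circuit_op (n + 0) (map cl []))"
  proof -
    have c1: "circuit_op (n + 0) (map cl []) = pm (n + 0) (seqf (map cf []))"
      by (rule circuit_op_cl) simp
    have c2: "cnot_circuit_op n gs = pm n (cf gs)" by (rule cnot_circuit_op_pm[OF v])
    have "embeds n 0 (pm n (cf gs)) (pm (n + 0) (seqf (map cf [])))"
      by (rule embeds_pm) (auto simp: gs)
    then show ?thesis using c1 c2 by simp
  qed
  show ?thesis
    apply (rule exI[where x=0], rule exI[where x="[]"])
    using e True by (simp add: valid_circuit_def)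
next
  case False
  then have n2: "n \<ge> 2" using n by simp
  define K where "K = ceil_log n"
  obtain m C where mC: "valid_circuit (n + m) C" "length C = 8 * K + 12" "m = n + 2 * n * 2 ^ K"
    "embeds n m (cnot_circuit_op n gs) (circuit_op (n + m) C)"
    using construction[OF n2 v] unfolding K_def by blast
  have K1: "K \<ge> 1"
  proof (rule ccontr)
    assume "\<not> K \<ge> 1"
    then have "K = 0" by simp
    then show False using ceil_log1[of n] n2 by (simp add: K_def)
  qed
  have lt: "2 ^ (K - 1) < n" using ceil_log2[of n] K1 by (simp add: K_def)
  have rn: "real n > 0" using n2 by simp
  have "real (K - 1) < log 2 (real n)"
  proof -
    have "(2::real) powr real (K - 1) = 2 ^ (K - 1)" by (simp add: powr_realpow)
    also have "\<dots> < real n" using lt by (metis of_nat_less_iff of_nat_numeral of_nat_power)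
    finally show ?thesis using less_log_iff[of 2 "real n" "real (K - 1)"] rn by simp
  qed
  then have Klog: "real K < log 2 (real n) + 1" using K1 by (simp add: of_nat_diff)
  have log1: "1 \<le> log 2 (real n)"
    using le_log_iff[of 2 "real n" 1] rn n2 by simp
  have len: "real (length C) \<le> 28 * log 2 (real n)"
    using mC(2) Klog log1 by simp
  have PK: "2 ^ K < 2 * n"
  proof -
    obtain K' where K': "K = Suc K'" using K1 by (cases K) auto
    have "(2::nat) ^ K = 2 * 2 ^ (K - 1)" using K' by simp
    then show ?thesis using lt by simp
  qed
  have "m \<le> n + 2 * n * (2 * n)" using mC(3) PK by simp
  also have "\<dots> \<le> 5 * n ^ 2" by (simp add: power2_eq_square)
  finally have "m \<le> 5 * n ^ 2" .
  then have mb: "real m \<le> 5 * real n ^ 2" by (metis of_nat_le_iff of_nat_mult of_nat_numeral of_nat_power)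
  show ?thesis using mC(1,4) len mb by blast
qed

theorem proposition6:
  shows "(\<exists>c1 c2 :: real. \<forall>n \<ge> 1. \<forall>gs. valid_cnot_circuit n gs \<longrightarrow>
            (\<exists>m C. valid_circuit (n + m) C \<and> real (length C) \<le> c1 * log 2 (real n) \<and>
                   real m \<le> c2 * real n ^ 2 \<and>
                   embeds n m (cnot_circuit_op n gs) (circuit_op (n + m) C)))
       \<and> (\<forall>Cs :: nat \<Rightarrow> (nat \<times> nat) list. (\<forall>n \<ge> 1. valid_cnot_circuit n (Cs n)) \<longrightarrow>
            in_QNC1 (\<lambda>n. cnot_circuit_op n (Cs n)))"
proof (intro conjI allI impI)
  show "\<exists>c1 c2 :: real. \<forall>n \<ge> 1. \<forall>gs. valid_cnot_circuit n gs \<longrightarrow>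
            (\<exists>m C. valid_circuit (n + m) C \<and> real (length C) \<le> c1 * log 2 (real n) \<and>
                   real m \<le> c2 * real n ^ 2 \<and>
                   embeds n m (cnot_circuit_op n gs) (circuit_op (n + m) C))"
    using part1 by blast
next
  fix Cs :: "nat \<Rightarrow> (nat \<times> nat) list"
  assume v: "\<forall>n \<ge> 1. valid_cnot_circuit n (Cs n)"
  show "in_QNC1 (\<lambda>n. cnot_circuit_op n (Cs n))"
    unfolding in_QNC1_def
  proof (intro conjI allI impI)
    fix n :: nat assume "n \<ge> 1"
    then show "unitary_mat (2 ^ n) (cnot_circuit_op n (Cs n))"
      using v unitary_cnot_circuit by blast
  next
    show "\<exists>c1 c2 :: real. \<exists>j :: nat. \<forall>n \<ge> 1. \<exists>m C.
        valid_circuit (n + m) C \<and> real (length C) \<le> c1 * log 2 (real n) \<and>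
        real m \<le> c2 * real n ^ j \<and> embeds n m (cnot_circuit_op n (Cs n)) (circuit_op (n + m) C)"
      using part1 v by blast
  qed
qed


end
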